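(* For every integer $k\ge 0$, as $n\to\infty$, \[ \langle S_{2,n}^{-k}\rangle\sim\left(\frac{n}{4}\right)^{-k}. \]
   Context: For $n\ge 1$, let $\Omega_n$ be the set of rooted plane (ordered) full binary trees with $n$ leaves (every internal node has exactly two children, left and right distinguished). The random model is $\Omega_n$ with the uniform probability measure $P_n$; $\langle\cdot\rangle$ denotes expectation with respect to $P_n$. Horton–Strahler ordering: every leaf has order 1; an internal node whose two children have different orders $r_1\neq r_2$ has order $\max\{r_1,r_2\}$; an internal node whose two children both have order $r$ has order $r+1$. A branch of order $r$ is a maximal connected path consisting of nodes all of order $r$. $S_{2,n}(\tau)$ is the number of branches of order $2$ in $\tau\in\Omega_n$; for $n\ge 2$ one has $S_{2,n}\ge 1$. For sequences, $a_n\sim b_n$ means $\lim_{n\to\infty}a_n/b_n=1$. *)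

theory Defs
  imports Complex_Main "HOL-Library.Landau_Symbols"
begin

datatype tree = Leaf | Node tree tree

fun leaves :: "tree \<Rightarrow> nat" where
  "leaves Leaf = 1"
| "leaves (Node l r) = leaves l + leaves r"

definition Omega :: "nat \<Rightarrow> tree set" where
  "Omega n = {t. leaves t = n}"

fun hs_order :: "tree \<Rightarrow> nat" where
  "hs_order Leaf = 1"
| "hs_order (Node l r) =
     (if hs_order l = hs_order r then hs_order l + 1 else max (hs_order l) (hs_order r))"

text \<open>Number of branches (maximal connected paths of nodes of order r) of order r.
A node of order r extends the branch of a child of order r if it has one
(it can have at most one), otherwise it starts a new branch.\<close>
fun branches :: "nat \<Rightarrow> tree \<Rightarrow> nat" where
  "branches r Leaf = (if r = 1 then 1 else 0)"
| "branches r (Node a b) = branches r a + branches r b +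
     (if hs_order (Node a b) = r \<and> hs_order a \<noteq> r \<and> hs_order b \<noteq> r then 1 else 0)"

definition uexp :: "nat \<Rightarrow> (tree \<Rightarrow> real) \<Rightarrow> real" where
  "uexp n f = (\<Sum>t\<in>Omega n. f t) / real (card (Omega n))"

end

theory Submission
  imports Defs "HOL-Real_Asymp.Real_Asymp"
begin


fun ch :: "tree \<Rightarrow> nat" where
  "ch Leaf = 0"
| "ch (Node l r) = (if l = Leaf \<and> r = Leaf then 1 else ch l + ch r)"

fun nc :: "tree \<Rightarrow> nat" where
  "nc Leaf = 1"
| "nc (Node l r) = (if l = Leaf \<and> r = Leaf then 0 else nc l + nc r)"

lemma hs_pos: "hs_order t \<ge> 1"
  by (induction t) auto

lemma hs_one: "hs_order t = 1 \<longleftrightarrow> t = Leaf"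
proof (cases t)
  case (Node l r)
  then show ?thesis using hs_pos[of l] hs_pos[of r] by auto
qed simp

lemma hs_ge1: "hs_order (Node a b) \<ge> hs_order a"
  by auto
lemma hs_ge2: "hs_order (Node a b) \<ge> hs_order b"
  by auto

lemma branches2: "branches 2 t = ch t"
proof (induction t)
  case (Node a b)
  show ?case
  proof (cases "a = Leaf \<and> b = Leaf")
    case True then show ?thesis by simp
  next
    case False
    have "\<not> (hs_order (Node a b) = 2 \<and> hs_order a \<noteq> 2 \<and> hs_order b \<noteq> 2)"
    proof
      assume h: "hs_order (Node a b) = 2 \<and> hs_order a \<noteq> 2 \<and> hs_order b \<noteq> 2"
      from False have "hs_order a \<noteq> 1 \<or> hs_order b \<noteq> 1" using hs_one by auto
      then have "hs_order a \<ge> 3 \<or> hs_order b \<ge> 3" using h hs_pos[of a] hs_pos[of b] by auto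
      then show False using h hs_ge1[where a=a and b=b] hs_ge2[where a=a and b=b] by linarith
    qed
    then show ?thesis using Node False by simp
  qed
qed simp

lemma leaves_pos: "leaves t \<ge> 1"
  by (induction t) auto

lemma leaves_ge2: "t \<noteq> Leaf \<Longrightarrow> leaves t \<ge> 2"
  proof (cases t)
  case (Node l r) then show ?thesis using leaves_pos[of l] leaves_pos[of r] by simp
qed simp

lemma nc_ch: "nc t + 2 * ch t = leaves t"
  by (induction t) auto

fun pos :: "tree \<Rightarrow> bool list set" where
  "pos Leaf = {[]}"
| "pos (Node l r) = insert [] (Cons False ` pos l \<union> Cons True ` pos r)"

fun lpaths :: "tree \<Rightarrow> bool list set" where
  "lpaths Leaf = {[]}"
| "lpaths (Node l r) = Cons False ` lpaths l \<union> Cons True ` lpaths r"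

fun ins :: "tree \<Rightarrow> bool list \<Rightarrow> bool \<Rightarrow> tree" where
  "ins t [] b = (if b then Node t Leaf else Node Leaf t)"
| "ins (Node l r) (False # p) b = Node (ins l p b) r"
| "ins (Node l r) (True # p) b = Node l (ins r p b)"
| "ins Leaf (x # p) b = Leaf"

lemma finite_pos: "finite (pos t)"
  by (induction t) auto

lemma finite_lpaths: "finite (lpaths t)"
  by (induction t) auto

lemma card_pos: "card (pos t) = 2 * leaves t - 1"
proof (induction t)
  case (Node l r)
  have d: "Cons False ` pos l \<inter> Cons True ` pos r = {}" by auto
  have "[] \<notin> Cons False ` pos l \<union> Cons True ` pos r" by auto
  then have "card (pos (Node l r)) = Suc (card (Cons False ` pos l) + card (Cons True ` pos r))"
    using d finite_pos by (simp add: card_Un_disjoint)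
  also have "\<dots> = Suc (card (pos l) + card (pos r))"
    by (simp add: card_image)
  finally show ?case using Node leaves_pos[of l] leaves_pos[of r] by simp
qed simp

lemma card_lpaths: "card (lpaths t) = leaves t"
proof (induction t)
  case (Node l r)
  have d: "Cons False ` lpaths l \<inter> Cons True ` lpaths r = {}" by auto
  then have "card (lpaths (Node l r)) = card (Cons False ` lpaths l) + card (Cons True ` lpaths r)"
    using finite_lpaths by (simp add: card_Un_disjoint)
  also have "\<dots> = card (lpaths l) + card (lpaths r)"
    by (simp add: card_image)
  finally show ?case using Node by simp
qed simp

lemma ins_not_leaf: "p \<in> pos t \<Longrightarrow> ins t p b \<noteq> Leaf"
  by (induction t p b rule: ins.induct) auto

lemma ch_Node_nl: "x \<noteq> Leaf \<Longrightarrow> ch (Node x y) = ch x + ch y"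
  by simp
lemma ch_Node_nr: "y \<noteq> Leaf \<Longrightarrow> ch (Node x y) = ch x + ch y"
  by simp

lemma leaves_ins: "p \<in> pos t \<Longrightarrow> leaves (ins t p b) = Suc (leaves t)"
  by (induction t p b rule: ins.induct) auto

lemma lpath_ins: "p \<in> pos t \<Longrightarrow> p @ [b] \<in> lpaths (ins t p b)"
  by (induction t p b rule: ins.induct) auto

lemma ins_inj: "p \<in> pos t \<Longrightarrow> p \<in> pos t' \<Longrightarrow> ins t p b = ins t' p b \<Longrightarrow> t = t'"
proof (induction t p b arbitrary: t' rule: ins.induct)
  case (2 l r p b)
  then show ?case by (cases t') auto
next
  case (3 l r p b)
  then show ?case by (cases t') auto
qed (auto split: if_splits)

lemma ins_surj: "q \<in> lpaths t' \<Longrightarrow> t' \<noteq> Leaf \<Longrightarrow>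
   \<exists>t p b. p \<in> pos t \<and> t' = ins t p b \<and> q = p @ [b]"
proof (induction t' arbitrary: q)
  case Leaf then show ?case by simp
next
  case (Node l r)
  from Node.prems(1) consider (L) q' where "q = False # q'" "q' \<in> lpaths l"
    | (R) q' where "q = True # q'" "q' \<in> lpaths r" by auto
  then show ?case
  proof cases
    case L
    show ?thesis
    proof (cases "l = Leaf")
      case True
      then have "q' = []" using L by simp
      then have "[] \<in> pos r \<and> Node l r = ins r [] False \<and> q = [] @ [False]"
        using L True by (cases r) auto
      then show ?thesis by blast
    next
      case False
      from Node.IH(1)[OF L(2) False] obtain t p b where
        "p \<in> pos t" "l = ins t p b" "q' = p @ [b]" by blast
      then have "False # p \<in> pos (Node t r) \<and> Node l r = ins (Node t r) (False # p) b \<and> q = (False # p) @ [b]"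
        using L by simp
      then show ?thesis by blast
    qed
  next
    case R
    show ?thesis
    proof (cases "r = Leaf")
      case True
      then have "q' = []" using R by simp
      then have "[] \<in> pos l \<and> Node l r = ins l [] True \<and> q = [] @ [True]"
        using R True by (cases l) auto
      then show ?thesis by blast
    next
      case False
      from Node.IH(2)[OF R(2) False] obtain t p b where
        "p \<in> pos t" "r = ins t p b" "q' = p @ [b]" by blast
      then have "True # p \<in> pos (Node l t) \<and> Node l r = ins (Node l t) (True # p) b \<and> q = (True # p) @ [b]"
        using R by simp
      then show ?thesis by blast
    qed
  qed
qed

lemma ins_sum:
  fixes g :: "nat \<Rightarrow> real"
  shows "(\<Sum>p\<in>pos t. g (ch (ins t p b))) + real (nc t) * g (ch t)
     = real (nc t) * g (ch t + 1) + real (2 * leaves t - 1) * g (ch t)"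
proof (induction t arbitrary: g)
  case Leaf then show ?case by simp
next
  case (Node l r)
  show ?case
  proof (cases "l = Leaf \<and> r = Leaf")
    case True then show ?thesis by simp
  next
    case False
    have s: "(\<Sum>p\<in>pos (Node l r). g (ch (ins (Node l r) p b))) =
      g (ch (Node l r)) + (\<Sum>p\<in>pos l. g (ch (ins l p b) + ch r)) + (\<Sum>p\<in>pos r. g (ch l + ch (ins r p b)))"
    proof -
      have d: "Cons False ` pos l \<inter> Cons True ` pos r = {}" by auto
      have n: "[] \<notin> Cons False ` pos l \<union> Cons True ` pos r" by auto
      have "(\<Sum>p\<in>pos (Node l r). g (ch (ins (Node l r) p b))) =
         g (ch (ins (Node l r) [] b)) + (\<Sum>p\<in>Cons False ` pos l. g (ch (ins (Node l r) p b)))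
          + (\<Sum>p\<in>Cons True ` pos r. g (ch (ins (Node l r) p b)))"
        using d n finite_pos by (simp add: sum.union_disjoint)
      also have "(\<Sum>p\<in>Cons False ` pos l. g (ch (ins (Node l r) p b))) = (\<Sum>p\<in>pos l. g (ch (ins l p b) + ch r))"
        by (simp add: sum.reindex ins_not_leaf cong: sum.cong)
      also have "(\<Sum>p\<in>Cons True ` pos r. g (ch (ins (Node l r) p b))) = (\<Sum>p\<in>pos r. g (ch l + ch (ins r p b)))"
        by (simp add: sum.reindex ins_not_leaf cong: sum.cong)
      also have "ch (ins (Node l r) [] b) = ch (Node l r)" by simp
      finally show ?thesis .
    qed
    have IHl: "(\<Sum>p\<in>pos l. g (ch (ins l p b) + ch r)) + real (nc l) * g (ch l + ch r)
     = real (nc l) * g (ch l + 1 + ch r) + real (2 * leaves l - 1) * g (ch l + ch r)"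
      using Node.IH(1)[of "\<lambda>x. g (x + ch r)"] by simp
    have IHr: "(\<Sum>p\<in>pos r. g (ch l + ch (ins r p b))) + real (nc r) * g (ch l + ch r)
     = real (nc r) * g (ch l + (ch r + 1)) + real (2 * leaves r - 1) * g (ch l + ch r)"
      using Node.IH(2)[of "\<lambda>x. g (ch l + x)"] by simp
    have e: "real (2 * leaves (Node l r) - 1) = real (2 * leaves l - 1) + real (2 * leaves r - 1) + 1"
      using leaves_pos[of l] leaves_pos[of r] by simp
    show ?thesis using False s IHl IHr e by (simp add: algebra_simps; blast)
  qed
qed

lemma finite_leaves_le: "finite {t. leaves t \<le> n}"
proof (induction n)
  case 0
  have "{t. leaves t \<le> 0} = {}" using leaves_pos by (metis (mono_tags) Collect_empty_eq le_zero_eq not_one_le_zero)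
  then show ?case by (metis finite.emptyI)
next
  case (Suc n)
  have "{t. leaves t \<le> Suc n} \<subseteq> insert Leaf ((\<lambda>(a,b). Node a b) ` ({t. leaves t \<le> n} \<times> {t. leaves t \<le> n}))"
  proof
    fix t assume "t \<in> {t. leaves t \<le> Suc n}"
    then show "t \<in> insert Leaf ((\<lambda>(a,b). Node a b) ` ({t. leaves t \<le> n} \<times> {t. leaves t \<le> n}))"
    proof (cases t)
      case (Node a b)
      with \<open>t \<in> _\<close> leaves_pos[of a] leaves_pos[of b] show ?thesis by force
    qed simp
  qed
  then show ?case by (rule finite_subset) (use Suc in auto)
qed

lemma finite_Omega: "finite (Omega n)"
  unfolding Omega_def by (rule finite_subset[OF _ finite_leaves_le[of n]]) auto

definition W :: "nat \<Rightarrow> (nat \<Rightarrow> real) \<Rightarrow> real" where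
  "W n g = (\<Sum>t\<in>Omega n. g (ch t))"

lemma W_rec:
  fixes g :: "nat \<Rightarrow> real"
  assumes n: "n \<ge> 1"
  shows "real (n+1) * W (n+1) g =
    (\<Sum>t\<in>Omega n. 2 * (real (nc t) * g (ch t + 1) + (real (2*n-1) - real (nc t)) * g (ch t)))"
proof -
  define D where "D = Sigma (Omega n) (\<lambda>t. pos t \<times> (UNIV :: bool set))"
  define \<Phi> where "\<Phi> = (\<lambda>(t::tree, (p::bool list, b::bool)). (ins t p b, p @ [b]))"
  have finD: "finite D" unfolding D_def using finite_Omega finite_pos by auto
  have inj: "inj_on \<Phi> D"
  proof (rule inj_onI)
    fix x y assume x: "x \<in> D" and y: "y \<in> D" and e: "\<Phi> x = \<Phi> y"
    obtain t p b where xe: "x = (t,(p,b))" by (cases x) auto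
    obtain t' p' b' where ye: "y = (t',(p',b'))" by (cases y) auto
    from e have "p = p'" "b = b'" unfolding \<Phi>_def xe ye by auto
    with e x y show "x = y" unfolding \<Phi>_def xe ye D_def using ins_inj by auto
  qed
  have img: "\<Phi> ` D = Sigma (Omega (n+1)) lpaths"
  proof
    show "\<Phi> ` D \<subseteq> Sigma (Omega (n+1)) lpaths"
      unfolding D_def \<Phi>_def Omega_def using leaves_ins lpath_ins by auto
  next
    show "Sigma (Omega (n+1)) lpaths \<subseteq> \<Phi> ` D"
    proof
      fix z assume z: "z \<in> Sigma (Omega (n+1)) lpaths"
      obtain t' q where ze: "z = (t', q)" by (cases z) auto
      have lt: "leaves t' = n + 1" and q: "q \<in> lpaths t'" using z ze Omega_def by auto
      have "t' \<noteq> Leaf" using lt n by auto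
      from ins_surj[OF q this] obtain t p b where tp: "p \<in> pos t" "t' = ins t p b" "q = p @ [b]" by blast
      have "leaves t = n" using leaves_ins[OF tp(1), of b] lt tp(2) by simp
      then have "(t,(p,b)) \<in> D" unfolding D_def Omega_def using tp by auto
      moreover have "z = \<Phi> (t,(p,b))" unfolding \<Phi>_def using ze tp by simp
      ultimately show "z \<in> \<Phi> ` D" by blast
    qed
  qed
  have "real (n+1) * W (n+1) g = (\<Sum>t'\<in>Omega (n+1). \<Sum>q\<in>lpaths t'. g (ch t'))"
    unfolding W_def sum_distrib_left by (rule sum.cong) (auto simp: card_lpaths Omega_def)
  also have "\<dots> = (\<Sum>z\<in>Sigma (Omega (n+1)) lpaths. g (ch (fst z)))"
    by (subst sum.Sigma) (auto simp: finite_Omega finite_lpaths split_beta)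
  also have "\<dots> = (\<Sum>x\<in>D. g (ch (fst (\<Phi> x))))"
    unfolding img[symmetric] by (rule sum.reindex[OF inj, unfolded comp_def])
  also have "\<dots> = (\<Sum>t\<in>Omega n. \<Sum>pb\<in>pos t \<times> (UNIV :: bool set). g (ch (ins t (fst pb) (snd pb))))"
    unfolding D_def \<Phi>_def
    by (subst sum.Sigma) (auto simp: finite_Omega finite_pos split_beta)
  also have "\<dots> = (\<Sum>t\<in>Omega n. 2 * (real (nc t) * g (ch t + 1) + (real (2*n-1) - real (nc t)) * g (ch t)))"
  proof (rule sum.cong[OF refl])
    fix t assume t: "t \<in> Omega n"
    have u: "(UNIV :: bool set) = {True, False}" by auto
    have "(\<Sum>pb\<in>pos t \<times> (UNIV :: bool set). g (ch (ins t (fst pb) (snd pb))))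
       = (\<Sum>p\<in>pos t. g (ch (ins t p True))) + (\<Sum>p\<in>pos t. g (ch (ins t p False)))"
      unfolding u sum.cartesian_product[symmetric, of "\<lambda>p b. g (ch (ins t p b))", unfolded split_beta] 
      by (simp add: sum.distrib)
    also have "\<dots> = 2 * (real (nc t) * g (ch t + 1) + (real (2*n-1) - real (nc t)) * g (ch t))"
      using ins_sum[of g t True] ins_sum[of g t False] t unfolding Omega_def by (simp add: algebra_simps)
    finally show "(\<Sum>pb\<in>pos t \<times> (UNIV :: bool set). g (ch (ins t (fst pb) (snd pb)))) = \<dots>" .
  qed
  finally show ?thesis .
qed



definition Nc :: "nat \<Rightarrow> nat \<Rightarrow> real" where
  "Nc n c = W n (\<lambda>x. if x = c then 1 else 0)"

lemma ch_le: "2 * ch t \<le> leaves t"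
  using nc_ch[of t] by linarith

lemma Nc_nonneg: "Nc n c \<ge> 0"
  unfolding Nc_def W_def by (rule sum_nonneg) auto

lemma W_fiber: "W n f = (\<Sum>c\<le>n. f c * Nc n c)"
proof -
  have "(\<Sum>c\<le>n. f c * Nc n c) = (\<Sum>c\<le>n. \<Sum>t\<in>Omega n. (if ch t = c then f c else 0))"
    unfolding Nc_def W_def sum_distrib_left by (auto intro!: sum.cong)
  also have "\<dots> = (\<Sum>t\<in>Omega n. \<Sum>c\<le>n. (if ch t = c then f c else 0))"
    by (rule sum.swap)
  also have "\<dots> = (\<Sum>t\<in>Omega n. f (ch t))"
  proof (rule sum.cong[OF refl])
    fix t assume "t \<in> Omega n"
    then have "ch t \<le> n" using ch_le[of t] unfolding Omega_def by auto
    then show "(\<Sum>c\<le>n. (if ch t = c then f c else 0)) = f (ch t)"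
      by (simp add: sum.delta'[of "{..n}" "ch t" f, simplified eq_commute] if_distrib cong: if_cong)
  qed
  finally show ?thesis unfolding W_def by simp
qed

lemma Nc_zero_big: "n < 2 * c \<Longrightarrow> Nc n c = 0"
  unfolding Nc_def W_def Omega_def using ch_le by (intro sum.neutral) (metis (mono_tags, lifting) le_less_trans less_not_refl mem_Collect_eq)

lemma sum_delta_pred: "(\<Sum>x\<le>(n::nat). if x + 1 = (c::nat) then A x else (0::real)) = (if 1 \<le> c \<and> c - 1 \<le> n then A (c - 1) else 0)"
proof (cases c)
  case 0 then show ?thesis by simp
next
  case (Suc d)
  then have "(\<Sum>x\<le>n. if x + 1 = c then A x else (0::real)) = (\<Sum>x\<le>n. if x = d then A x else 0)"
    by (intro sum.cong) auto
  also have "\<dots> = (if d \<le> n then A d else 0)" by (simp add: sum.delta')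
  finally show ?thesis using Suc by simp
qed

lemma Nc_rec:
  assumes n: "n \<ge> 1"
  shows "real (n+1) * Nc (n+1) c = 2 * (real n - 1 + 2 * real c) * Nc n c
     + (if c \<ge> 1 then 2 * (real n + 2 - 2 * real c) * Nc n (c-1) else 0)"
proof -
  define G where "G = (\<lambda>x::nat. 2 * ((real n - 2 * real x) * (if x + 1 = c then 1 else 0)
      + (real n - 1 + 2 * real x) * (if x = c then 1 else 0)))"
  have "real (n+1) * Nc (n+1) c = (\<Sum>t\<in>Omega n. G (ch t))"
    unfolding Nc_def W_rec[OF n] G_def
  proof (rule sum.cong[OF refl])
    fix t assume "t \<in> Omega n"
    then have "nc t + 2 * ch t = n" using nc_ch[of t] unfolding Omega_def by simp
    then have "real (nc t + 2 * ch t) = real n" by simp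
    then have "real (nc t) = real n - 2 * real (ch t)" by simp
    moreover have "real (2 * n - 1) = 2 * real n - 1" using n by (simp add: of_nat_diff)
    ultimately show "2 * (real (nc t) * (if ch t + 1 = c then 1 else 0) + (real (2 * n - 1) - real (nc t)) * (if ch t = c then 1 else 0)) =
         2 * ((real n - 2 * real (ch t)) * (if ch t + 1 = c then 1 else 0) + (real n - 1 + 2 * real (ch t)) * (if ch t = c then 1 else 0))"
      by simp
  qed
  also have "\<dots> = W n G" unfolding W_def ..
  also have "\<dots> = (\<Sum>x\<le>n. G x * Nc n x)" by (rule W_fiber)
  also have "\<dots> = (\<Sum>x\<le>n. (if x + 1 = c then 2 * (real n - 2 * real x) * Nc n x else 0))
       + (\<Sum>x\<le>n. (if x = c then 2 * (real n - 1 + 2 * real x) * Nc n x else 0))"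
    unfolding sum.distrib[symmetric] G_def by (intro sum.cong refl) simp
  also have "\<dots> = (if 1 \<le> c \<and> c - 1 \<le> n then 2 * (real n - 2 * real (c - 1)) * Nc n (c - 1) else 0)
       + (if c \<le> n then 2 * (real n - 1 + 2 * real c) * Nc n c else 0)"
    unfolding sum_delta_pred by (simp add: sum.delta')
  also have "\<dots> = 2 * (real n - 1 + 2 * real c) * Nc n c
     + (if c \<ge> 1 then 2 * (real n + 2 - 2 * real c) * Nc n (c-1) else 0)"
  proof -
    have a: "(if c \<le> n then 2 * (real n - 1 + 2 * real c) * Nc n c else 0) = 2 * (real n - 1 + 2 * real c) * Nc n c"
      using Nc_zero_big[of n c] by auto
    have b: "(if 1 \<le> c \<and> c - 1 \<le> n then 2 * (real n - 2 * real (c - 1)) * Nc n (c - 1) else 0)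
        = (if c \<ge> 1 then 2 * (real n + 2 - 2 * real c) * Nc n (c-1) else 0)"
    proof (cases "1 \<le> c")
      case True
      then have "real (c - 1) = real c - 1" by (simp add: of_nat_diff)
      then show ?thesis using Nc_zero_big[of n "c-1"] True by (auto simp: algebra_simps)
    qed simp
    show ?thesis unfolding a b by simp
  qed
  finally show ?thesis .
qed

lemma Nc_one: "Nc 1 c = (if c = 0 then 1 else 0)"
proof -
  have "Omega 1 = {Leaf}" unfolding Omega_def
  proof (intro equalityI subsetI)
    fix t assume "t \<in> {t. leaves t = 1}"
    then show "t \<in> {Leaf}" using leaves_ge2[of t] by (cases "t = Leaf") auto
  qed simp
  then show ?thesis unfolding Nc_def W_def by simp
qed

lemma Nc_ratio:
  assumes "n \<ge> 2"
  shows "Nc n 0 = 0 \<and> (\<forall>c. 4 * real c * (real c + 1) * Nc n (c+1)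
          = (real n - 2 * real c) * (real n - 2 * real c - 1) * Nc n c)"
  using assms
proof (induction n rule: dec_induct)
  case base
  have N2: "Nc 2 c = (if c = 1 then 1 else 0)" for c
  proof -
    have e: "real (1+1) * Nc (1+1) c = 2 * (real 1 - 1 + 2 * real c) * Nc 1 c
     + (if c \<ge> 1 then 2 * (real 1 + 2 - 2 * real c) * Nc 1 (c-1) else 0)"
      by (rule Nc_rec) simp
    have o: "Nc (Suc 0) d = (if d = 0 then 1 else 0)" for d using Nc_one[of d] by simp
    have "(1::nat) + 1 = 2" by simp
    then show ?thesis using e o by (cases "c = 0"; cases "c = 1") (auto simp: o numeral_2_eq_2)
  qed
  show ?case by (simp add: N2)
next
  case (step n)
  have n1: "n \<ge> 1" using step by simp
  have z: "Nc n 0 = 0" and r: "\<And>c. 4 * real c * (real c + 1) * Nc n (c+1)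
          = (real n - 2 * real c) * (real n - 2 * real c - 1) * Nc n c" using step.IH by auto
  have z': "Nc (n+1) 0 = 0" using Nc_rec[OF n1, of 0] z by simp
  have "4 * real c * (real c + 1) * Nc (Suc n) (c+1)
          = (real (Suc n) - 2 * real c) * (real (Suc n) - 2 * real c - 1) * Nc (Suc n) c" for c
  proof -
    have A: "real (n+1) * Nc (n+1) (c+1) = 2 * (real n + 1 + 2 * real c) * Nc n (c+1)
       + 2 * (real n - 2 * real c) * Nc n c"
      using Nc_rec[OF n1, of "c+1"] by (simp add: algebra_simps)
    have B: "real (n+1) * Nc (n+1) c = 2 * (real n - 1 + 2 * real c) * Nc n c
       + 2 * (real n + 2 - 2 * real c) * (real n + 1 - 2 * real c) * Nc n (c-1) / (real n + 1 - 2 * real c)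
       " if "c \<ge> 1" "real n + 1 - 2 * real c \<noteq> 0"
      using Nc_rec[OF n1, of c] that by simp
    have C: "(real n + 2 - 2 * real c) * (real n + 1 - 2 * real c) * Nc n (c-1) = 4 * real c * (real c - 1) * Nc n c"
      if "c \<ge> 1" using r[of "c-1"] that by (simp add: of_nat_diff algebra_simps)
    have B': "real (n+1) * Nc (n+1) c * (real n + 1 - 2 * real c) = 2 * (real n - 1 + 2 * real c) * Nc n c * (real n + 1 - 2 * real c)
       + 2 * 4 * real c * (real c - 1) * Nc n c"
    proof (cases "c \<ge> 1")
      case True
      have R: "real (n+1) * Nc (n+1) c = 2 * (real n - 1 + 2 * real c) * Nc n c + 2 * (real n + 2 - 2 * real c) * Nc n (c-1)"
        using Nc_rec[OF n1, of c] True by simp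
      have "real (n+1) * Nc (n+1) c * (real n + 1 - 2 * real c) = 2 * (real n - 1 + 2 * real c) * Nc n c * (real n + 1 - 2 * real c)
         + 2 * ((real n + 2 - 2 * real c) * (real n + 1 - 2 * real c) * Nc n (c-1))"
        using arg_cong[OF R, of "\<lambda>x. x * (real n + 1 - 2 * real c)"] by (simp add: algebra_simps)
      then show ?thesis unfolding C[OF True] by simp
    next
      case False
      then show ?thesis using Nc_rec[OF n1, of c] z by simp
    qed
    have "real (n+1) * (4 * real c * (real c + 1) * Nc (Suc n) (c+1)) =
       4 * real c * (real c + 1) * (2 * (real n + 1 + 2 * real c) * Nc n (c+1)
       + 2 * (real n - 2 * real c) * Nc n c)" using A by simp
    also have "\<dots> = 2 * (real n + 1 + 2 * real c) * (4 * real c * (real c + 1) * Nc n (c+1))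
       + 4 * real c * (real c + 1) * 2 * (real n - 2 * real c) * Nc n c"
      by (simp add: algebra_simps)
    also have "\<dots> = 2 * (real n + 1 + 2 * real c) * ((real n - 2 * real c) * (real n - 2 * real c - 1) * Nc n c)
       + 4 * real c * (real c + 1) * 2 * (real n - 2 * real c) * Nc n c"
      unfolding r[of c] ..
    also have "\<dots> = (real n - 2 * real c) * (2 * (real n - 1 + 2 * real c) * Nc n c * (real n + 1 - 2 * real c)
       + 2 * 4 * real c * (real c - 1) * Nc n c)"
      by (simp add: algebra_simps)
    also have "\<dots> = (real n - 2 * real c) * (real (n+1) * Nc (n+1) c * (real n + 1 - 2 * real c))"
      using B' by simp
    finally have "real (n+1) * (4 * real c * (real c + 1) * Nc (Suc n) (c+1)) =
      real (n+1) * ((real (Suc n) - 2 * real c) * (real (Suc n) - 2 * real c - 1) * Nc (Suc n) c)"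
      by (simp add: algebra_simps)
    then show ?thesis by simp
  qed
  then show ?case using z' by simp
qed




lemma step_up:
  fixes n c :: nat and e :: real
  assumes n: "n \<ge> 2" and e: "e > 0" and en: "e * real n \<ge> 4" and c: "1 \<le> c"
    and cn: "real n - 4 * real c \<ge> e * real n"
  shows "(1 + e) * Nc n c \<le> Nc n (c+1)"
proof -
  define a where "a = real n - 2 * real c"
  define b where "b = 2 * real c"
  have r: "4 * real c * (real c + 1) * Nc n (c+1) = a * (a - 1) * Nc n c"
    using Nc_ratio[OF n] unfolding a_def by auto
  have bb: "b * (b + 2) = 4 * real c * (real c + 1)" unfolding b_def by (simp add: algebra_simps)
  have ab: "a - b \<ge> e * real n" using cn unfolding a_def b_def by simp
  have b2: "b \<ge> 2" using c unfolding b_def by simp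
  have apb: "a + b = real n" unfolding a_def b_def by simp
  have en0: "e * real n \<ge> 0" using e by simp
  have bn: "b \<le> real n / 2" using ab apb en0 by linarith
  have n4: "real n \<ge> 4" using bn b2 by linarith
  have b2n: "b + 2 \<le> real n" using bn n4 by linarith
  have h1: "b * (b + 2) \<le> (real n / 2) * real n"
    by (rule mult_mono) (use bn b2n b2 in auto)
  have h2': "e * (b * (b + 2)) \<le> e * ((real n / 2) * real n)"
    by (rule mult_left_mono[OF h1]) (use e in simp)
  have h2: "e * (b * (b + 2)) \<le> (e * real n) * real n / 2"
    using h2' by (simp add: algebra_simps)
  have h3: "(a - b) * real n \<ge> (e * real n) * real n"
    using ab by (simp add: mult_right_mono)
  have h4: "(e * real n) * real n \<ge> 4 * real n"
    using en by (simp add: mult_right_mono)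
  have id: "a * (a - 1) = (a - b) * real n + b * (b + 2) - a - 2 * b"
    unfolding apb[symmetric] by (simp add: algebra_simps)
  have key0: "a * (a - 1) \<ge> b * (b + 2) + e * (b * (b + 2))"
    using id h2 h3 h4 apb bn n4 by linarith
  have key: "a * (a - 1) \<ge> (1 + e) * (b * (b + 2))"
    using key0 by (simp add: algebra_simps)
  have pos: "4 * real c * (real c + 1) > 0" using c by simp
  have "(1 + e) * (4 * real c * (real c + 1)) * Nc n c \<le> a * (a - 1) * Nc n c"
    using key bb Nc_nonneg[of n c] by (simp add: mult_right_mono)
  then have "4 * real c * (real c + 1) * ((1 + e) * Nc n c) \<le> 4 * real c * (real c + 1) * Nc n (c+1)"
    using r by (simp add: algebra_simps)
  then show ?thesis using pos by (rule mult_left_le_imp_le)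
qed

lemma step_down:
  fixes n c :: nat and e :: real
  assumes n: "n \<ge> 1" and e: "e > 0" and cn: "4 * real c - real n \<ge> e * real n"
  shows "(1 + e) * Nc n (c+1) \<le> Nc n c"
proof (cases "n < 2 * (c + 1)")
  case True
  then show ?thesis using Nc_zero_big[OF True] Nc_nonneg[of n c] by simp
next
  case False
  then have n2: "n \<ge> 2" and cn2: "2 * c + 2 \<le> n" by auto
  define a where "a = real n - 2 * real c"
  define b where "b = 2 * real c"
  have r: "4 * real c * (real c + 1) * Nc n (c+1) = a * (a - 1) * Nc n c"
    using Nc_ratio[OF n2] unfolding a_def by auto
  have bb: "b * (b + 2) = 4 * real c * (real c + 1)" unfolding b_def by (simp add: algebra_simps)
  have ba: "b - a \<ge> e * real n" using cn unfolding a_def b_def by simp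
  have a2: "a \<ge> 2" using cn2 unfolding a_def by simp
  have an: "a \<le> real n" unfolding a_def by simp
  have apb: "a + b = real n" unfolding a_def b_def by simp
  have "e * real n > 0" using e n2 by simp
  then have "real c > 0" using cn by linarith
  then have c1: "c \<ge> 1" by simp
  have h1: "(b - a) * real n \<ge> (e * real n) * real n"
    using ba by (simp add: mult_right_mono)
  have h2: "a * (a - 1) \<le> real n * real n"
    by (rule mult_mono) (use an a2 in auto)
  have h3: "e * (a * (a - 1)) \<le> e * (real n * real n)"
    by (rule mult_left_mono[OF h2]) (use e in simp)
  have id: "b * (b + 2) - a * (a - 1) = (b - a) * real n + 2 * b + a"
    unfolding apb[symmetric] by (simp add: algebra_simps)
  have key0: "b * (b + 2) \<ge> a * (a - 1) + e * (a * (a - 1))"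
    using id h1 h3 a2 b_def by (simp add: algebra_simps)
  have key: "(1 + e) * (a * (a - 1)) \<le> b * (b + 2)"
    using key0 by (simp add: algebra_simps)
  have pos: "4 * real c * (real c + 1) > 0" using c1 by simp
  have "(1 + e) * (a * (a - 1)) * Nc n c \<le> 4 * real c * (real c + 1) * Nc n c"
    using key bb Nc_nonneg[of n c] by (simp add: mult_right_mono)
  moreover have "4 * real c * (real c + 1) * ((1 + e) * Nc n (c+1)) = (1 + e) * (4 * real c * (real c + 1) * Nc n (c+1))"
    by (simp add: algebra_simps)
  moreover have "\<dots> = (1 + e) * (a * (a - 1)) * Nc n c" unfolding r by (simp add: algebra_simps)
  ultimately have "4 * real c * (real c + 1) * ((1 + e) * Nc n (c+1)) \<le> 4 * real c * (real c + 1) * Nc n c"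
    by linarith
  then show ?thesis using pos by (rule mult_left_le_imp_le)
qed

lemma card_Omega_sum: "real (card (Omega n)) = (\<Sum>c\<le>n. Nc n c)"
  using W_fiber[of n "\<lambda>_. 1"] unfolding W_def by simp

lemma Nc_le_card: "Nc n c \<le> real (card (Omega n))"
proof -
  have "Nc n c \<le> (\<Sum>t\<in>Omega n. (1::real))"
    unfolding Nc_def W_def by (rule sum_mono) auto
  then show ?thesis by simp
qed

lemma low_tail:
  fixes n c :: nat and e :: real
  assumes n: "n \<ge> 2" and e: "e > 0" and en: "e * real n \<ge> 4" and c: "1 \<le> c"
    and cn: "real n - 4 * real c \<ge> 2 * e * real n"
    and L: "4 * real L \<le> e * real n"
  shows "(1 + e) ^ L * Nc n c \<le> real (card (Omega n))"
proof -
  have "j \<le> L \<Longrightarrow> (1 + e) ^ j * Nc n c \<le> Nc n (c + j)" for j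
  proof (induction j)
    case 0 then show ?case by simp
  next
    case (Suc j)
    have "real n - 4 * real (c + j) \<ge> e * real n"
      using cn L Suc.prems by simp
    then have st: "(1 + e) * Nc n (c + j) \<le> Nc n (c + j + 1)"
      using step_up[OF n e en, of "c + j"] c by simp
    have "(1 + e) ^ Suc j * Nc n c = (1 + e) * ((1 + e) ^ j * Nc n c)" by simp
    also have "\<dots> \<le> (1 + e) * Nc n (c + j)"
      using Suc by (intro mult_left_mono) (use e in auto)
    also have "\<dots> \<le> Nc n (c + Suc j)" using st by simp
    finally show ?case .
  qed
  from this[of L] show ?thesis using Nc_le_card[of n "c + L"] by simp
qed

lemma high_tail:
  fixes n c :: nat and e :: real
  assumes n: "n \<ge> 1" and e: "e > 0"
    and cn: "4 * real c - real n \<ge> 2 * e * real n"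
    and L: "4 * real L \<le> e * real n"
  shows "(1 + e) ^ L * Nc n c \<le> real (card (Omega n))"
proof -
  have "e * real n > 0" using e n by simp
  then have cL: "real L < real c" using cn L by linarith
  have "j \<le> L \<Longrightarrow> (1 + e) ^ j * Nc n c \<le> Nc n (c - j)" for j
  proof (induction j)
    case 0 then show ?case by simp
  next
    case (Suc j)
    have jc: "Suc j \<le> c" using Suc.prems cL by linarith
    have "4 * real (c - Suc j) - real n \<ge> e * real n"
      using cn L Suc.prems jc by (simp add: of_nat_diff)
    then have st: "(1 + e) * Nc n (c - Suc j + 1) \<le> Nc n (c - Suc j)"
      using step_down[OF n e] by blast
    have eq: "c - Suc j + 1 = c - j" using jc by simp
    have "(1 + e) ^ Suc j * Nc n c = (1 + e) * ((1 + e) ^ j * Nc n c)" by simp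
    also have "\<dots> \<le> (1 + e) * Nc n (c - j)"
      using Suc by (intro mult_left_mono) (use e in auto)
    also have "\<dots> \<le> Nc n (c - Suc j)" using st eq by simp
    finally show ?case .
  qed
  from this[of L] show ?thesis using Nc_le_card[of n "c - L"] by simp
qed

fun comb :: "nat \<Rightarrow> tree" where
  "comb 0 = Leaf"
| "comb (Suc m) = Node Leaf (comb m)"

lemma leaves_comb: "leaves (comb m) = Suc m"
  by (induction m) auto

lemma card_Omega_pos: "n \<ge> 1 \<Longrightarrow> card (Omega n) > 0"
proof -
  assume "n \<ge> 1"
  then have "comb (n - 1) \<in> Omega n" unfolding Omega_def using leaves_comb[of "n-1"] by simp
  then show ?thesis using finite_Omega[of n] card_gt_0_iff by blast
qed

lemma tail:
  fixes n c :: nat and e :: real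
  assumes n: "n \<ge> 2" and e: "e > 0" and en: "e * real n \<ge> 4" and c: "1 \<le> c"
    and cn: "\<bar>4 * real c - real n\<bar> \<ge> 2 * e * real n"
  shows "Nc n c / real (card (Omega n)) \<le> 1 / (1 + e) ^ nat \<lfloor>e * real n / 4\<rfloor>"
proof -
  define L where "L = nat \<lfloor>e * real n / 4\<rfloor>"
  have fl0: "\<lfloor>e * real n / 4\<rfloor> \<ge> 0" using en by simp
  have "real L = real_of_int \<lfloor>e * real n / 4\<rfloor>" unfolding L_def using fl0 by simp
  also have "\<dots> \<le> e * real n / 4" by (rule of_int_floor_le)
  finally have L: "4 * real L \<le> e * real n" by simp
  have "(1 + e) ^ L * Nc n c \<le> real (card (Omega n))"
  proof (cases "real n - 4 * real c \<ge> 2 * e * real n")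
    case True
    show ?thesis by (rule low_tail[OF n e en c True L])
  next
    case False
    then have h: "4 * real c - real n \<ge> 2 * e * real n" using cn by linarith
    have "n \<ge> 1" using n by simp
    then show ?thesis using high_tail[OF _ e h L] by simp
  qed
  moreover have "card (Omega n) > 0" using card_Omega_pos n by simp
  moreover have "(1 + e) ^ L > 0" using e by simp
  ultimately show ?thesis unfolding L_def[symmetric] by (simp add: field_simps)
qed

lemma uexp_formula:
  "uexp n (\<lambda>t. real (branches 2 t) powi (- int k)) =
     (\<Sum>c\<le>n. real c powi (- int k) * Nc n c) / real (card (Omega n))"
  unfolding uexp_def branches2 using W_fiber[of n "\<lambda>c. real c powi (- int k)"] unfolding W_def by simp

lemma q_formula:
  assumes n: "n \<ge> 2"
  shows "uexp n (\<lambda>t. real (branches 2 t) powi (- int k)) / ((real n / 4) powi (- int k)) =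
     (\<Sum>c\<in>{1..n}. (Nc n c / real (card (Omega n))) * (real n / (4 * real c)) ^ k)"
proof -
  define T where "T = real (card (Omega n))"
  define g where "g = (real n / 4) powi (- int k)"
  have T0: "T \<noteq> 0" unfolding T_def using card_Omega_pos[of n] n by simp
  have g0: "g \<noteq> 0" unfolding g_def using n by simp
  have z: "Nc n 0 = 0" using Nc_ratio[OF n] by simp
  have s: "{..n} = insert 0 {1..n}" by auto
  have e1: "(\<Sum>c\<le>n. real c powi (- int k) * Nc n c) = (\<Sum>c\<in>{1..n}. real c powi (- int k) * Nc n c)"
    unfolding s using z by simp
  have hc: "real c powi (- int k) / g = (real n / (4 * real c)) ^ k" if "c \<ge> 1" for c
    using that n unfolding g_def by (simp add: power_int_minus power_divide field_simps)
  have "uexp n (\<lambda>t. real (branches 2 t) powi (- int k)) / g = (\<Sum>c\<in>{1..n}. real c powi (- int k) * Nc n c) / T / g"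
    unfolding uexp_formula e1 T_def ..
  also have "\<dots> = (\<Sum>c\<in>{1..n}. (Nc n c / T) * (real c powi (- int k) / g))"
    unfolding sum_divide_distrib using T0 g0 by (intro sum.cong refl) (simp add: field_simps)
  also have "\<dots> = (\<Sum>c\<in>{1..n}. (Nc n c / T) * (real n / (4 * real c)) ^ k)"
    by (intro sum.cong refl) (simp add: hc)
  finally show ?thesis unfolding T_def g_def .
qed

lemma q_bounds:
  fixes n k :: nat and e :: real
  assumes n: "n \<ge> 2" and e: "e > 0" and e4: "e < 1/4" and en: "e * real n \<ge> 4"
  defines "\<theta> \<equiv> 1 / (1 + e) ^ nat \<lfloor>e * real n / 4\<rfloor>"
  shows "(\<Sum>c\<in>{1..n}. (Nc n c / real (card (Omega n))) * (real n / (4 * real c)) ^ k)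
            \<le> (1 / (1 - 2 * e)) ^ k + real n * \<theta> * real n ^ k"
    and "(\<Sum>c\<in>{1..n}. (Nc n c / real (card (Omega n))) * (real n / (4 * real c)) ^ k)
            \<ge> (1 / (1 + 2 * e)) ^ k - real n * \<theta>"
proof -
  define T where "T = real (card (Omega n))"
  define p where "p c = Nc n c / T" for c
  define G where "G = {c\<in>{1..n}. \<bar>4 * real c - real n\<bar> < 2 * e * real n}"
  define B where "B = {c\<in>{1..n}. \<not> \<bar>4 * real c - real n\<bar> < 2 * e * real n}"
  define F where "F c = p c * (real n / (4 * real c)) ^ k" for c
  have T0: "T > 0" unfolding T_def using card_Omega_pos[of n] n by simp
  have p0: "p c \<ge> 0" for c unfolding p_def using T0 Nc_nonneg[of n c] by simp
  have F0: "F c \<ge> 0" for c unfolding F_def using p0[of c] by simp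
  have z: "Nc n 0 = 0" using Nc_ratio[OF n] by simp
  have s: "{..n} = insert 0 {1..n}" by auto
  have psum: "(\<Sum>c\<in>{1..n}. p c) = 1"
  proof -
    have "(\<Sum>c\<in>{1..n}. Nc n c) = T" unfolding T_def card_Omega_sum s using z by simp
    then show ?thesis unfolding p_def sum_divide_distrib[symmetric] using T0 by simp
  qed
  have GB: "{1..n} = G \<union> B" "G \<inter> B = {}" unfolding G_def B_def by auto
  have fG: "finite G" and fB: "finite B" unfolding G_def B_def by auto
  have split: "(\<Sum>c\<in>{1..n}. f c) = (\<Sum>c\<in>G. f c) + (\<Sum>c\<in>B. f c)" for f :: "nat \<Rightarrow> real"
    unfolding GB(1) by (rule sum.union_disjoint[OF fG fB GB(2)])
  have pB: "p c \<le> \<theta>" if "c \<in> B" for c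
    using that tail[OF n e en, of c] unfolding B_def p_def T_def \<theta>_def by auto
  have cardB: "real (card B) \<le> real n"
  proof -
    have "card B \<le> card {1..n}" unfolding B_def by (rule card_mono) auto
    then show ?thesis by simp
  qed
  have th0: "\<theta> \<ge> 0" unfolding \<theta>_def using e by simp
  have sumB: "(\<Sum>c\<in>B. p c) \<le> real n * \<theta>"
  proof -
    have "(\<Sum>c\<in>B. p c) \<le> real (card B) * \<theta>" by (rule sum_bounded_above) (rule pB)
    also have "\<dots> \<le> real n * \<theta>" using cardB th0 by (simp add: mult_right_mono)
    finally show ?thesis .
  qed
  have sumG: "(\<Sum>c\<in>G. p c) = 1 - (\<Sum>c\<in>B. p c)" using split[of p] psum by simp
  have sumGle: "(\<Sum>c\<in>G. p c) \<le> 1" using sumG sum_nonneg[of B p] p0 by auto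
  have nn: "real n \<ge> 2" using n by simp
  show "(\<Sum>c\<in>{1..n}. (Nc n c / real (card (Omega n))) * (real n / (4 * real c)) ^ k)
            \<le> (1 / (1 - 2 * e)) ^ k + real n * \<theta> * real n ^ k"
  proof -
    define M where "M = (1 / (1 - 2 * e)) ^ k"
    have M0: "M \<ge> 0" unfolding M_def using e4 by simp
    have FG: "F c \<le> p c * M" if "c \<in> G" for c
    proof -
      from that have c: "c \<ge> 1" "(1 - 2 * e) * real n < 4 * real c" unfolding G_def by (auto simp: algebra_simps)
      have pos: "(1 - 2 * e) * real n > 0" using e4 nn by simp
      have "real n / (4 * real c) \<le> real n / ((1 - 2 * e) * real n)"
        using c pos by (intro divide_left_mono) auto
      also have "\<dots> = 1 / (1 - 2 * e)" using nn by simp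
      finally have "(real n / (4 * real c)) ^ k \<le> M" unfolding M_def by (intro power_mono) auto
      then show ?thesis unfolding F_def using p0[of c] by (simp add: mult_left_mono)
    qed
    have FB: "F c \<le> \<theta> * real n ^ k" if "c \<in> B" for c
    proof -
      from that have c: "c \<ge> 1" unfolding B_def by auto
      have "real n / (4 * real c) \<le> real n / 1"
        using c by (intro divide_left_mono) auto
      then have "(real n / (4 * real c)) ^ k \<le> real n ^ k" by (intro power_mono) auto
      then show ?thesis unfolding F_def using pB[OF that] p0[of c] th0
        by (intro mult_mono) auto
    qed
    have "(\<Sum>c\<in>G. F c) \<le> (\<Sum>c\<in>G. p c * M)" by (rule sum_mono) (rule FG)
    also have "\<dots> = M * (\<Sum>c\<in>G. p c)" by (simp add: sum_distrib_left mult.commute)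
    also have "\<dots> \<le> M" using sumGle M0 by (simp add: mult_left_le)
    finally have g: "(\<Sum>c\<in>G. F c) \<le> M" .
    have "(\<Sum>c\<in>B. F c) \<le> real (card B) * (\<theta> * real n ^ k)" by (rule sum_bounded_above) (rule FB)
    also have "\<dots> \<le> real n * (\<theta> * real n ^ k)" using cardB th0 by (simp add: mult_right_mono)
    finally have b: "(\<Sum>c\<in>B. F c) \<le> real n * \<theta> * real n ^ k" by simp
    show ?thesis using split[of F] g b unfolding F_def p_def T_def M_def by simp
  qed
  show "(\<Sum>c\<in>{1..n}. (Nc n c / real (card (Omega n))) * (real n / (4 * real c)) ^ k)
            \<ge> (1 / (1 + 2 * e)) ^ k - real n * \<theta>"
  proof -
    define m where "m = (1 / (1 + 2 * e)) ^ k"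
    have m0: "m \<ge> 0" "m \<le> 1" unfolding m_def using e by (auto intro: power_le_one)
    have FG: "F c \<ge> p c * m" if "c \<in> G" for c
    proof -
      from that have c: "c \<ge> 1" "4 * real c < (1 + 2 * e) * real n" unfolding G_def by (auto simp: algebra_simps)
      have "1 / (1 + 2 * e) = real n / ((1 + 2 * e) * real n)" using nn by simp
      also have "\<dots> \<le> real n / (4 * real c)"
        using c e by (intro divide_left_mono) auto
      finally have "m \<le> (real n / (4 * real c)) ^ k" unfolding m_def by (intro power_mono) (use e in auto)
      then show ?thesis unfolding F_def using p0[of c] by (simp add: mult_left_mono)
    qed
    have "(\<Sum>c\<in>G. p c * m) \<le> (\<Sum>c\<in>G. F c)" by (rule sum_mono) (rule FG)
    moreover have "(\<Sum>c\<in>G. p c * m) = m * (1 - (\<Sum>c\<in>B. p c))" unfolding sumG[symmetric]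
      by (simp add: sum_distrib_left mult.commute)
    moreover have "m * (1 - (\<Sum>c\<in>B. p c)) \<ge> m - (\<Sum>c\<in>B. p c)"
      using m0 sum_nonneg[of B p] p0 by (auto simp: algebra_simps intro: mult_left_le_one_le)
    moreover have "(\<Sum>c\<in>B. F c) \<ge> 0" using F0 by (simp add: sum_nonneg)
    ultimately have "(\<Sum>c\<in>{1..n}. F c) \<ge> m - real n * \<theta>" using split[of F] sumB by linarith
    then show ?thesis unfolding F_def p_def T_def m_def by simp
  qed
qed

theorem proposition2:
  fixes k :: nat
  shows "(\<lambda>n. uexp n (\<lambda>t. real (branches 2 t) powi (- int k)))
           \<sim>[at_top] (\<lambda>n. (real n / 4) powi (- int k))"
proof (rule asymp_equivI')
  define q where "q n = uexp n (\<lambda>t. real (branches 2 t) powi (- int k)) / (real n / 4) powi (- int k)" for n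
  show "((\<lambda>n. uexp n (\<lambda>t. real (branches 2 t) powi (- int k)) / (real n / 4) powi (- int k)) \<longlongrightarrow> 1) at_top"
    unfolding q_def[symmetric]
  proof (rule tendstoI)
    fix d :: real assume d: "d > 0"
    obtain e where e: "0 < e" "e < 1/4" "(1 / (1 - 2 * e)) ^ k < 1 + d/2" "(1 / (1 + 2 * e)) ^ k > 1 - d/2"
    proof -
      have t1: "((\<lambda>x::real. (1 / (1 - 2 * x)) ^ k) \<longlongrightarrow> (1 / (1 - 2 * 0)) ^ k) (at_right 0)"
        by (intro tendsto_intros) auto
      have t2: "((\<lambda>x::real. (1 / (1 + 2 * x)) ^ k) \<longlongrightarrow> (1 / (1 + 2 * 0)) ^ k) (at_right 0)"
        by (intro tendsto_intros) auto
      have ev1: "eventually (\<lambda>x::real. (1 / (1 - 2 * x)) ^ k < 1 + d/2) (at_right 0)"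
        using order_tendstoD(2)[OF t1] d by simp
      have ev2: "eventually (\<lambda>x::real. (1 / (1 + 2 * x)) ^ k > 1 - d/2) (at_right 0)"
        using order_tendstoD(1)[OF t2] d by simp
      from eventually_conj[OF ev1 ev2] obtain b where b: "b > 0"
        "\<And>y. y > 0 \<Longrightarrow> y < b \<Longrightarrow> (1 / (1 - 2 * y)) ^ k < 1 + d/2 \<and> (1 / (1 + 2 * y)) ^ k > 1 - d/2"
        unfolding eventually_at_right_field by auto
      define y where "y = min (b/2) (1/8)"
      have "y > 0" "y < b" "y < 1/4" unfolding y_def using b(1) by auto
      then show ?thesis using that[of y] b(2)[of y] by auto
    qed
    define E where "E n = real n ^ (k+1) * (1 + e) powr (1 - e * real n / 4)" for n :: nat
    have "(E \<longlongrightarrow> 0) at_top" unfolding E_def using e(1) by real_asymp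
    then have ev1: "eventually (\<lambda>n. E n < d/2) at_top"
      by (rule order_tendstoD(2)) (use d in simp)
    have ev2: "eventually (\<lambda>n. n \<ge> max 2 (nat \<lceil>4 / e\<rceil>)) at_top" by (rule eventually_ge_at_top)
    show "eventually (\<lambda>n. dist (q n) 1 < d) at_top"
      using ev1 ev2
    proof eventually_elim
      case (elim n)
      have n: "n \<ge> 2" using elim by simp
      have "real n \<ge> 4 / e" using elim(2)
        by (metis max.bounded_iff nat_ceiling_le_eq of_nat_le_iff order_trans real_nat_ceiling_ge)
      then have en: "e * real n \<ge> 4" using e(1) by (simp add: field_simps)
      define L where "L = nat \<lfloor>e * real n / 4\<rfloor>"
      define \<theta> where "\<theta> = 1 / (1 + e) ^ L"
      have qb: "q n \<le> (1 / (1 - 2 * e)) ^ k + real n * \<theta> * real n ^ k"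
          "q n \<ge> (1 / (1 + 2 * e)) ^ k - real n * \<theta>"
        unfolding q_def q_formula[OF n] \<theta>_def L_def using q_bounds[OF n e(1) e(2) en] by auto
      have fl0: "\<lfloor>e * real n / 4\<rfloor> \<ge> 0" using en by simp
      have "real L = real_of_int \<lfloor>e * real n / 4\<rfloor>" unfolding L_def using fl0 by simp
      moreover have "e * real n / 4 < real_of_int \<lfloor>e * real n / 4\<rfloor> + 1" by (rule real_of_int_floor_add_one_gt)
      ultimately have Lg: "- real L \<le> 1 - e * real n / 4" by linarith
      have "\<theta> = (1 + e) powr (- real L)"
        unfolding \<theta>_def using e(1) by (simp add: powr_minus powr_realpow divide_inverse)
      also have "\<dots> \<le> (1 + e) powr (1 - e * real n / 4)"
        by (rule powr_mono[OF Lg]) (use e(1) in simp)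
      finally have th: "\<theta> \<le> (1 + e) powr (1 - e * real n / 4)" .
      have th0: "\<theta> \<ge> 0" unfolding \<theta>_def using e(1) by simp
      have "real n * \<theta> * real n ^ k = real n ^ (k+1) * \<theta>" by simp
      also have "\<dots> \<le> E n" unfolding E_def by (rule mult_left_mono[OF th]) simp
      finally have b1: "real n * \<theta> * real n ^ k \<le> E n" .
      have "real n * \<theta> \<le> real n * \<theta> * real n ^ k"
      proof -
        have "1 \<le> real n ^ k" using n by simp
        then show ?thesis using th0 mult_left_mono[of 1 "real n ^ k" "real n * \<theta>"] by simp
      qed
      then have b2: "real n * \<theta> \<le> E n" using b1 by linarith
      show "dist (q n) 1 < d" unfolding dist_real_def using qb b1 b2 e(3) e(4) elim(1) by linarith
    qed
  qed
qed

end
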